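(* Let $(\lambda,\omega)$ be a stable Hamiltonian structure on a closed 3-manifold $M$, with integrable region $U=U_1\sqcup\dots\sqcup U_k$ as in the structure theorem. Then there exist arbitrarily $C^\infty$-small perturbations of $(\lambda,\omega)$, compactly supported in the interior of $U$ and $T^2$-invariant on each $U_i$, yielding a stable Hamiltonian structure $(\tilde\lambda,\tilde\omega)$ such that the slope of $\ker\tilde\omega$ (equivalently of its Reeb vector field) is non-constant on each connected component $U_i$.
   Context: A stable Hamiltonian structure (SHS) on an oriented 3-manifold $M$ is a pair $(\lambda,\omega)$ with $\lambda\wedge\omega>0$, $d\omega=0$, $\ker\omega\subset\ker d\lambda$; its Reeb vector field $X$ satisfies $\lambda(X)=1$, $\iota_X\omega=0$. Structure theorem (Cieliebak–Volkov): there exist a compact $X$-invariant 3-submanifold $N$, a disjoint union $U=U_1\sqcup\dots\sqcup U_k$ of compact regions $U_i\cong T^2\times[0,1]$ with $N\cap U=\partial N\cap\partial U$, $N\cup U=M$, such that (among other properties) on each $U_i$ the SHS is $T^2$-invariant: in coordinates $(x,y,t)$ one has $\lambda=g_1(t)dx+g_2(t)dy+g_3(t)dt$ and $\omega=h_1(t)dt\wedge dx+h_2(t)dt\wedge dy$. The slope of $\ker\omega$ on $T^2\times\{t\}$ is the slope of the linear vector field $h_1(t)\partial_x+h_2(t)\partial_y$ spanning $\ker\omega$ there. *)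

theory Defs
  imports "HOL-Analysis.Analysis"
begin

text \<open>A T2-invariant
form on T2 x [0,1] is described by its coefficient functions of t; we take them
as smooth functions on the real line (any smooth function on [0,1] extends).\<close>
definition smooth_fun :: "(real \<Rightarrow> real) \<Rightarrow> bool" where
  "smooth_fun f \<longleftrightarrow> (\<forall>j x. ((deriv ^^ j) f) differentiable (at x))"

text \<open>The T2-invariant pair lambda = g1 dx + g2 dy + g3 dt,
omega = h1 dt/\dx + h2 dt/\dy on T2 x [0,1] (coordinates x, y, t) is a stable
Hamiltonian structure, where the orientation of T2 x [0,1] is sigma * dx/\dy/\dt,
sigma = 1 or -1.  Unfolded:
  lambda /\ omega = (g2 h1 - g1 h2) dx/\dy/\dt, so lambda/\omega > 0 iff
    sigma (g2 h1 - g1 h2) > 0;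
  d omega = 0 holds automatically;
  ker omega = span(-h2 d/dx + h1 d/dy) and d lambda = dt /\ (g1' dx + g2' dy), so
    ker omega \<subseteq> ker d lambda iff g1' h2 = g2' h1.\<close>
definition T2_inv_SHS ::
  "real \<Rightarrow> (real \<Rightarrow> real) \<Rightarrow> (real \<Rightarrow> real) \<Rightarrow> (real \<Rightarrow> real)
     \<Rightarrow> (real \<Rightarrow> real) \<Rightarrow> (real \<Rightarrow> real) \<Rightarrow> bool" where
  "T2_inv_SHS \<sigma> g1 g2 g3 h1 h2 \<longleftrightarrow>
     smooth_fun g1 \<and> smooth_fun g2 \<and> smooth_fun g3 \<and> smooth_fun h1 \<and> smooth_fun h2 \<and>
     (\<forall>t\<in>{0..1}. \<sigma> * (g2 t * h1 t - g1 t * h2 t) > 0) \<and>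
     (\<forall>t\<in>{0..1}. deriv g1 t * h2 t = deriv g2 t * h1 t)"

text \<open>The slope of ker omega on T2 x {t} is the slope of the linear vector field
h1 d/dx + h2 d/dy, i.e. the point [h1 t : h2 t] of RP1.  It is constant on
[0,1] iff all these directions are parallel.\<close>
definition constant_slope :: "(real \<Rightarrow> real) \<Rightarrow> (real \<Rightarrow> real) \<Rightarrow> bool" where
  "constant_slope h1 h2 \<longleftrightarrow> (\<forall>s\<in>{0..1}. \<forall>t\<in>{0..1}. h1 s * h2 t = h2 s * h1 t)"

definition Cm_close :: "nat \<Rightarrow> real \<Rightarrow> (real \<Rightarrow> real) \<Rightarrow> (real \<Rightarrow> real) \<Rightarrow> bool" where
  "Cm_close m \<epsilon> f g \<longleftrightarrow> (\<forall>j\<le>m. \<forall>t\<in>{0..1}. \<bar>(deriv ^^ j) f t - (deriv ^^ j) g t\<bar> < \<epsilon>)"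

definition agree_near_boundary :: "(real \<Rightarrow> real) \<Rightarrow> (real \<Rightarrow> real) \<Rightarrow> bool" where
  "agree_near_boundary f g \<longleftrightarrow> (\<exists>d>0. \<forall>t. (t \<le> d \<or> t \<ge> 1 - d) \<longrightarrow> f t = g t)"

end

theory Submission
  imports Defs "HOL-Computational_Algebra.Polynomial"
begin


lemma sm_diff: "smooth_fun f \<Longrightarrow> f differentiable (at x)"
  unfolding smooth_fun_def by (metis funpow_0)

lemma sm_DERIV: "smooth_fun f \<Longrightarrow> (f has_real_derivative deriv f x) (at x)"
  using sm_diff DERIV_deriv_iff_real_differentiable by blast

lemma sm_deriv: "smooth_fun f \<Longrightarrow> smooth_fun (deriv f)"
  unfolding smooth_fun_def by (metis funpow_Suc_right comp_apply)

lemma sm_cont: "smooth_fun f \<Longrightarrow> continuous_on S f"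
  by (meson sm_diff differentiable_imp_continuous_within continuous_at_imp_continuous_on)

lemma sm_from_deriv:
  assumes "\<And>x. (F has_real_derivative G x) (at x)" "smooth_fun G"
  shows "smooth_fun F"
proof -
  have dF: "deriv F = G" using assms(1) DERIV_imp_deriv by blast
  show ?thesis unfolding smooth_fun_def
  proof (intro allI)
    fix j x show "(deriv ^^ j) F differentiable at x"
    proof (cases j)
      case 0 then show ?thesis using assms(1) real_differentiable_def by auto
    next
      case (Suc i) then show ?thesis using assms(2) dF unfolding smooth_fun_def
        by (metis funpow_Suc_right comp_apply)
    qed
  qed
qed

lemma lin_deriv:
  fixes A B :: "real \<Rightarrow> real"
  assumes "\<And>i x. i < j \<Longrightarrow> (deriv ^^ i) A differentiable (at x)"
      and "\<And>i x. i < j \<Longrightarrow> (deriv ^^ i) B differentiable (at x)"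
  shows "(deriv ^^ j) (\<lambda>x. A x + c * B x) = (\<lambda>x. (deriv ^^ j) A x + c * (deriv ^^ j) B x)"
  using assms
proof (induction j)
  case 0 then show ?case by simp
next
  case (Suc j)
  have IH: "(deriv ^^ j) (\<lambda>x. A x + c * B x) = (\<lambda>x. (deriv ^^ j) A x + c * (deriv ^^ j) B x)"
    using Suc by auto
  show ?case
  proof
    fix x
    have dA: "((deriv ^^ j) A has_real_derivative deriv ((deriv ^^ j) A) x) (at x)"
      using Suc.prems(1)[of j x] DERIV_deriv_iff_real_differentiable by blast
    have dB: "((deriv ^^ j) B has_real_derivative deriv ((deriv ^^ j) B) x) (at x)"
      using Suc.prems(2)[of j x] DERIV_deriv_iff_real_differentiable by blast
    have "((\<lambda>x. (deriv ^^ j) A x + c * (deriv ^^ j) B x) has_real_derivative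
           deriv ((deriv ^^ j) A) x + c * deriv ((deriv ^^ j) B) x) (at x)"
      using DERIV_add[OF dA DERIV_cmult[OF dB, of c]] by simp
    then show "(deriv ^^ Suc j) (\<lambda>x. A x + c * B x) x = (deriv ^^ Suc j) A x + c * (deriv ^^ Suc j) B x"
      using IH by (simp add: DERIV_imp_deriv)
  qed
qed

lemma sm_lin:
  assumes "smooth_fun A" "smooth_fun B"
  shows "smooth_fun (\<lambda>x. A x + c * B x)"
  unfolding smooth_fun_def
proof (intro allI)
  fix j x
  have "(deriv ^^ j) (\<lambda>x. A x + c * B x) = (\<lambda>x. (deriv ^^ j) A x + c * (deriv ^^ j) B x)"
    using assms unfolding smooth_fun_def by (intro lin_deriv) auto
  then show "(deriv ^^ j) (\<lambda>x. A x + c * B x) differentiable at x"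
    using assms unfolding smooth_fun_def by (simp add: differentiable_add differentiable_mult)
qed

lemma sm_const: "smooth_fun (\<lambda>x. c)"
proof -
  have "\<And>j. (deriv ^^ Suc j) (\<lambda>x::real. c) = (\<lambda>x. 0::real)"
  proof -
    fix j show "(deriv ^^ Suc j) (\<lambda>x::real. c) = (\<lambda>x. 0::real)"
      by (induction j) (auto simp: deriv_const)
  qed
  then show ?thesis unfolding smooth_fun_def
    by (metis funpow_0 differentiable_const not0_implies_Suc)
qed

lemma sm_mult_aux:
  "\<forall>f g. smooth_fun f \<longrightarrow> smooth_fun g \<longrightarrow> (\<forall>j\<le>n. \<forall>x. (deriv ^^ j) (\<lambda>x. f x * g x) differentiable (at x))"
proof (induction n)
  case 0
  show ?case
  proof (intro allI impI)
    fix f g j x assume f: "smooth_fun f" and g: "smooth_fun g" and "j \<le> (0::nat)"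
    then have "j = 0" by simp
    moreover have "(\<lambda>x. f x * g x) differentiable (at x)"
      using sm_diff[OF f] sm_diff[OF g] by (rule differentiable_mult)
    ultimately show "(deriv ^^ j) (\<lambda>x. f x * g x) differentiable (at x)" by simp
  qed
next
  case (Suc n)
  show ?case
  proof (intro allI impI)
    fix f g j x assume f: "smooth_fun f" and g: "smooth_fun g" and j: "j \<le> Suc n"
    show "(deriv ^^ j) (\<lambda>x. f x * g x) differentiable (at x)"
    proof (cases j)
      case 0
      have "(\<lambda>x. f x * g x) differentiable (at x)"
        using sm_diff[OF f] sm_diff[OF g] by (rule differentiable_mult)
      then show ?thesis using 0 by simp
    next
      case (Suc i)
      have i: "i \<le> n" using j Suc by simp
      have dfg: "deriv (\<lambda>x. f x * g x) = (\<lambda>x. deriv f x * g x + 1 * (f x * deriv g x))"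
      proof
        fix x
        have "((\<lambda>x. f x * g x) has_real_derivative deriv f x * g x + f x * deriv g x) (at x)"
          using sm_DERIV[OF f] sm_DERIV[OF g] by (auto intro!: derivative_eq_intros)
        then show "deriv (\<lambda>x. f x * g x) x = deriv f x * g x + 1 * (f x * deriv g x)"
          by (simp add: DERIV_imp_deriv)
      qed
      have s1: "\<forall>k\<le>n. \<forall>x. (deriv ^^ k) (\<lambda>x. deriv f x * g x) differentiable (at x)"
        using Suc.IH f g sm_deriv by blast
      have s2: "\<forall>k\<le>n. \<forall>x. (deriv ^^ k) (\<lambda>x. f x * deriv g x) differentiable (at x)"
        using Suc.IH f g sm_deriv by blast
      have "(deriv ^^ i) (\<lambda>x. deriv f x * g x + 1 * (f x * deriv g x)) =
            (\<lambda>x. (deriv ^^ i) (\<lambda>x. deriv f x * g x) x + 1 * (deriv ^^ i) (\<lambda>x. f x * deriv g x) x)"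
        using s1 s2 i by (intro lin_deriv) auto
      then have "(deriv ^^ j) (\<lambda>x. f x * g x) = (\<lambda>x. (deriv ^^ i) (\<lambda>x. deriv f x * g x) x + 1 * (deriv ^^ i) (\<lambda>x. f x * deriv g x) x)"
        using Suc dfg by (simp add: funpow_Suc_right del: funpow.simps)
      then show ?thesis using s1 s2 i by (simp add: differentiable_add)
    qed
  qed
qed

lemma sm_mult: "smooth_fun f \<Longrightarrow> smooth_fun g \<Longrightarrow> smooth_fun (\<lambda>x. f x * g x)"
  using sm_mult_aux unfolding smooth_fun_def by (meson order_refl)

lemma affine_deriv:
  assumes "smooth_fun f"
  shows "(deriv ^^ j) (\<lambda>x. f (c * x + d)) = (\<lambda>x. c ^ j * (deriv ^^ j) f (c * x + d))"
proof (induction j)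
  case 0 then show ?case by simp
next
  case (Suc j)
  show ?case
  proof
    fix x
    have df: "((deriv ^^ j) f has_real_derivative (deriv ^^ Suc j) f (c * x + d)) (at (c * x + d))"
      using assms unfolding smooth_fun_def
      by (simp add: DERIV_deriv_iff_real_differentiable)
    have dl: "((\<lambda>x. c * x + d) has_real_derivative c) (at x)"
      by (auto intro!: derivative_eq_intros)
    have "((\<lambda>x. (deriv ^^ j) f (c * x + d)) has_real_derivative
            (deriv ^^ Suc j) f (c * x + d) * c) (at x)"
      using DERIV_chain2[of "(deriv ^^ j) f" _ "\<lambda>x. c * x + d", OF df dl] by simp
    then have "((\<lambda>x. c ^ j * (deriv ^^ j) f (c * x + d)) has_real_derivative
            c ^ j * ((deriv ^^ Suc j) f (c * x + d) * c)) (at x)"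
      by (rule DERIV_cmult)
    then show "(deriv ^^ Suc j) (\<lambda>x. f (c * x + d)) x = c ^ Suc j * (deriv ^^ Suc j) f (c * x + d)"
      using Suc.IH DERIV_imp_deriv by (simp add: mult_ac)
  qed
qed

lemma sm_affine: "smooth_fun f \<Longrightarrow> smooth_fun (\<lambda>x. f (c * x + d))"
proof -
  assume f: "smooth_fun f"
  show ?thesis unfolding smooth_fun_def
  proof (intro allI)
    fix j x
    have "(\<lambda>x. f (c * x + d)) = (\<lambda>x. f (c * x + d))" ..
    have d: "((deriv ^^ j) f) differentiable (at (c * x + d))" using f unfolding smooth_fun_def by blast
    have "(\<lambda>x. c ^ j * (deriv ^^ j) f (c * x + d)) differentiable (at x)"
      proof (intro differentiable_mult differentiable_const)
      have "(\<lambda>x. c * x + d) differentiable (at x)" by (auto intro!: derivative_intros)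
      then show "(\<lambda>x. (deriv ^^ j) f (c * x + d)) differentiable (at x)"
        using differentiable_chain_at[of "\<lambda>x. c * x + d" x "(deriv ^^ j) f"] d by (simp add: o_def)
    qed
    then show "(deriv ^^ j) (\<lambda>x. f (c * x + d)) differentiable at x"
      using affine_deriv[OF f] by simp
  qed
qed



lemma lim_poly_exp: "((\<lambda>z. poly q z * exp (-z)) \<longlongrightarrow> (0::real)) at_top"
proof -
  have "((\<lambda>z. \<Sum>i\<le>degree q. coeff q i * (z^i / exp z)) \<longlongrightarrow> (\<Sum>i\<le>degree q. coeff q i * 0)) at_top"
    by (intro tendsto_sum tendsto_mult tendsto_const tendsto_power_div_exp_0)
  moreover have "\<And>z. poly q z * exp (-z) = (\<Sum>i\<le>degree q. coeff q i * (z^i / exp z))"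
    by (simp add: poly_altdef sum_distrib_left exp_minus divide_inverse mult_ac)
  ultimately show ?thesis by simp
qed

definition Qf :: "real poly \<Rightarrow> real \<Rightarrow> real" where
  "Qf p x = (if x > 0 then poly p (inverse x) * exp (- inverse x) else 0)"

lemma Qf_deriv: "(Qf p has_real_derivative Qf ([:0,0,1:] * (p - pderiv p)) x) (at x)"
proof -
  consider "x > 0" | "x < 0" | "x = 0" by linarith
  then show ?thesis
  proof cases
    case 1
    have d1: "((\<lambda>y. poly p (inverse y)) has_real_derivative poly (pderiv p) (inverse x) * (- (inverse x * inverse x))) (at x)"
      using DERIV_chain2[OF poly_DERIV DERIV_inverse[of x]] 1 by (simp add: power2_eq_square)
    have d2: "((\<lambda>y. exp (- inverse y)) has_real_derivative exp (- inverse x) * (inverse x * inverse x)) (at x)"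
      using DERIV_chain2[OF DERIV_exp DERIV_minus[OF DERIV_inverse[of x]]] 1 by (simp add: power2_eq_square)
    have d: "((\<lambda>y. poly p (inverse y) * exp (- inverse y)) has_real_derivative
       poly (pderiv p) (inverse x) * (- (inverse x * inverse x)) * exp (- inverse x) + poly p (inverse x) * (exp (- inverse x) * (inverse x * inverse x))) (at x)"
      using DERIV_mult[OF d1 d2] by (simp add: algebra_simps)
    have e: "poly (pderiv p) (inverse x) * (- (inverse x * inverse x)) * exp (- inverse x) + poly p (inverse x) * (exp (- inverse x) * (inverse x * inverse x))
        = Qf ([:0,0,1:] * (p - pderiv p)) x"
      using 1 by (simp add: Qf_def poly_mult poly_diff algebra_simps)
    show ?thesis
      by (rule has_field_derivative_transform_within_open[OF d[unfolded e], of "{0<..}"])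
         (use 1 in \<open>auto simp: Qf_def\<close>)
  next
    case 2
    have e: "Qf ([:0,0,1:] * (p - pderiv p)) x = 0" using 2 by (simp add: Qf_def)
    show ?thesis unfolding e
      by (rule has_field_derivative_transform_within_open[OF DERIV_const[of 0], of "{..<0}"])
         (use 2 in \<open>auto simp: Qf_def\<close>)
  next
    case 3
    have e: "Qf ([:0,0,1:] * (p - pderiv p)) x = 0" using 3 by (simp add: Qf_def)
    have L: "((\<lambda>y. (Qf p y - Qf p 0) / (y - 0)) \<longlongrightarrow> 0) (at_left 0)"
    proof (rule tendsto_eventually)
      show "\<forall>\<^sub>F y in at_left 0. (Qf p y - Qf p 0) / (y - 0) = (0::real)"
      proof -
        have ev: "eventually (\<lambda>y. y \<in> {-1<..<0}) (at_left (0::real))"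
          by (rule eventually_at_left_real) simp
        then show ?thesis by eventually_elim (auto simp: Qf_def divide_inverse)
      qed
    qed
    have R: "((\<lambda>y. (Qf p y - Qf p 0) / (y - 0)) \<longlongrightarrow> 0) (at_right 0)"
      unfolding filterlim_at_right_to_top
    proof (rule Lim_transform_eventually[OF lim_poly_exp[of "pCons 0 p"]])
      show "\<forall>\<^sub>F z in at_top. poly (pCons 0 p) z * exp (- z) = (Qf p (inverse z) - Qf p 0) / (inverse z - 0)"
        using eventually_gt_at_top[of 0] by eventually_elim (auto simp: Qf_def divide_inverse)
    qed
    have "((\<lambda>y. (Qf p y - Qf p 0) / (y - 0)) \<longlongrightarrow> 0) (at 0)"
      using L R filterlim_at_split by blast
    then show ?thesis using e 3 unfolding has_field_derivative_iff by simp
  qed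
qed

lemma Qf_deriv_eq: "deriv (Qf p) = Qf ([:0,0,1:] * (p - pderiv p))"
  using Qf_deriv DERIV_imp_deriv by blast

definition Efun :: "real \<Rightarrow> real" where "Efun = Qf 1"

lemma Efun_iter: "\<exists>p. (deriv ^^ j) Efun = Qf p"
proof (induction j)
  case 0 then show ?case by (auto simp: Efun_def)
next
  case (Suc j)
  then obtain p where "(deriv ^^ j) Efun = Qf p" by blast
  then show ?case by (auto simp: Qf_deriv_eq)
qed

lemma Efun_smooth: "smooth_fun Efun"
  unfolding smooth_fun_def
proof (intro allI)
  fix j x
  obtain p where "(deriv ^^ j) Efun = Qf p" using Efun_iter by blast
  then show "(deriv ^^ j) Efun differentiable (at x)"
    using Qf_deriv real_differentiable_def by metis
qed

lemma Efun_pos: "x > 0 \<Longrightarrow> Efun x > 0" and Efun_zero: "x \<le> 0 \<Longrightarrow> Efun x = 0"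
  by (auto simp: Efun_def Qf_def)



lemma lin3:
  fixes a1 a2 a3 b1 b2 b3 :: real
  shows "\<exists>c1 c2 c3. (c1 \<noteq> 0 \<or> c2 \<noteq> 0 \<or> c3 \<noteq> 0) \<and> c1*a1 + c2*a2 + c3*a3 = 0 \<and> c1*b1 + c2*b2 + c3*b3 = 0"
proof -
  let ?x1 = "a2*b3 - a3*b2" and ?x2 = "a3*b1 - a1*b3" and ?x3 = "a1*b2 - a2*b1"
  show ?thesis
  proof (cases "?x1 \<noteq> 0 \<or> ?x2 \<noteq> 0 \<or> ?x3 \<noteq> 0")
    case True
    then show ?thesis by (rule_tac x="?x1" in exI, rule_tac x="?x2" in exI, rule_tac x="?x3" in exI) (auto simp: algebra_simps)
  next
    case False
    then have z1: "a2*b3 = a3*b2" and z2: "a3*b1 = a1*b3" and z3: "a1*b2 = a2*b1" by auto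
    show ?thesis
    proof (cases "a1 = 0 \<and> a2 = 0 \<and> a3 = 0")
      case True
      show ?thesis
      proof (cases "b1 = 0 \<and> b2 = 0")
        case True then show ?thesis using \<open>a1 = 0 \<and> a2 = 0 \<and> a3 = 0\<close>
          by (rule_tac x=1 in exI, rule_tac x=0 in exI, rule_tac x=0 in exI) auto
      next
        case False then show ?thesis using \<open>a1 = 0 \<and> a2 = 0 \<and> a3 = 0\<close>
          by (rule_tac x=b2 in exI, rule_tac x="-b1" in exI, rule_tac x=0 in exI) (auto simp: algebra_simps)
      qed
    next
      case False
      then consider "a1 \<noteq> 0" | "a2 \<noteq> 0" | "a3 \<noteq> 0" by blast
      then show ?thesis
      proof cases
        case 1 then show ?thesis
          by (rule_tac x=a2 in exI, rule_tac x="-a1" in exI, rule_tac x=0 in exI) (auto simp: algebra_simps z3)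
      next
        case 2 then show ?thesis
          by (rule_tac x=a2 in exI, rule_tac x="-a1" in exI, rule_tac x=0 in exI) (auto simp: algebra_simps z3)
      next
        case 3 then show ?thesis
          by (rule_tac x=a3 in exI, rule_tac x=0 in exI, rule_tac x="-a1" in exI) (auto simp: algebra_simps z2)
      qed
    qed
  qed
qed

lemma pos_pert:
  fixes s g1 g2 h1 h2 G1 G2 f K \<delta> \<mu> :: real
  assumes s: "\<bar>s\<bar> = 1" and K: "1 \<le> K"
    and b: "\<bar>g1\<bar> \<le> K" "\<bar>g2\<bar> \<le> K" "\<bar>h1\<bar> \<le> K" "\<bar>h2\<bar> \<le> K" "\<bar>G1\<bar> \<le> K" "\<bar>G2\<bar> \<le> K" "\<bar>f\<bar> \<le> K"
    and d: "0 \<le> \<delta>" "\<delta> \<le> 1" and m: "\<mu> \<le> s * (g2*h1 - g1*h2)" and dm: "\<delta> * (6 * K^3) < \<mu>"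
  shows "s * ((g2 + \<delta>*G2) * (h1 + \<delta>*(-(f*h2))) - (g1 + \<delta>*G1) * (h2 + \<delta>*(f*h1))) > 0"
proof -
  have K0: "0 \<le> K" using K by simp
  have p2: "\<And>x y. \<bar>x\<bar> \<le> K \<Longrightarrow> \<bar>y\<bar> \<le> K \<Longrightarrow> \<bar>x*y\<bar> \<le> K^3"
  proof -
    fix x y :: real assume "\<bar>x\<bar> \<le> K" "\<bar>y\<bar> \<le> K"
    then have "\<bar>x*y\<bar> \<le> K*K" by (simp add: abs_mult mult_mono')
    also have "K*K \<le> K*K*K" using K K0 by (simp add: mult_le_cancel_left1)
    finally show "\<bar>x*y\<bar> \<le> K^3" by (simp add: power3_eq_cube)
  qed
  have p3: "\<And>x y z. \<bar>x\<bar> \<le> K \<Longrightarrow> \<bar>y\<bar> \<le> K \<Longrightarrow> \<bar>z\<bar> \<le> K \<Longrightarrow> \<bar>x*y*z\<bar> \<le> K^3"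
  proof -
    fix x y z :: real assume a: "\<bar>x\<bar> \<le> K" "\<bar>y\<bar> \<le> K" "\<bar>z\<bar> \<le> K"
    then have "\<bar>x*y\<bar> \<le> K*K" by (simp add: abs_mult mult_mono')
    then have "\<bar>x*y\<bar>*\<bar>z\<bar> \<le> K*K*K" using a(3) by (simp add: mult_mono' abs_mult)
    then show "\<bar>x*y*z\<bar> \<le> K^3" by (simp add: power3_eq_cube abs_mult)
  qed
  define E where "E = G2*h1 - g2*f*h2 - G1*h2 - g1*f*h1 + \<delta>*(-(G2*f*h2) - G1*f*h1)"
  have e1: "\<bar>G2*h1\<bar> \<le> K^3" "\<bar>G1*h2\<bar> \<le> K^3" using p2 b by auto
  have e2: "\<bar>g2*f*h2\<bar> \<le> K^3" "\<bar>g1*f*h1\<bar> \<le> K^3" "\<bar>G2*f*h2\<bar> \<le> K^3" "\<bar>G1*f*h1\<bar> \<le> K^3"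
    using p3 b by auto
  have "\<bar>\<delta>*(-(G2*f*h2) - G1*f*h1)\<bar> \<le> 1 * (K^3 + K^3)"
    unfolding abs_mult using d e2 by (intro mult_mono) auto
  then have "\<bar>E\<bar> \<le> 6 * K^3" unfolding E_def using e1 e2 by (simp add: abs_le_iff)
  then have "\<bar>s * \<delta> * E\<bar> \<le> \<delta> * (6 * K^3)" using s d by (simp add: abs_mult mult_left_mono)
  moreover have "s * ((g2 + \<delta>*G2) * (h1 + \<delta>*(-(f*h2))) - (g1 + \<delta>*G1) * (h2 + \<delta>*(f*h1)))
      = s * (g2*h1 - g1*h2) + s * \<delta> * E" unfolding E_def by (simp add: algebra_simps)
  ultimately show ?thesis using m dm by linarith
qed



definition bump :: "real \<Rightarrow> real \<Rightarrow> real \<Rightarrow> real" where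
  "bump a b t = Efun (t - a) * Efun (b - t)"

lemma bump_smooth: "smooth_fun (bump a b)"
proof -
  have 1: "smooth_fun (\<lambda>t. Efun (1 * t + - a))" by (rule sm_affine[OF Efun_smooth])
  have 2: "smooth_fun (\<lambda>t. Efun ((-1) * t + b))" by (rule sm_affine[OF Efun_smooth])
  have "smooth_fun (\<lambda>t. Efun (1 * t + - a) * Efun ((-1) * t + b))" by (rule sm_mult[OF 1 2])
  then show ?thesis unfolding bump_def[abs_def] by simp
qed

lemma bump_pos: "a < t \<Longrightarrow> t < b \<Longrightarrow> bump a b t > 0"
  by (simp add: bump_def Efun_pos)

lemma bump_zero: "t \<le> a \<or> b \<le> t \<Longrightarrow> bump a b t = 0"
  by (auto simp: bump_def Efun_zero)

lemma antider:
  fixes G :: "real \<Rightarrow> real" and a :: real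
  assumes G: "smooth_fun G" and a: "0 < a" and z: "\<And>t. t \<le> a \<Longrightarrow> G t = 0"
  shows "((\<lambda>t. integral {0..t} G) has_real_derivative G x) (at x)"
proof (cases "x < a")
  case True
  have Gx: "G x = 0" using True z by simp
  have d0: "((\<lambda>t. 0) has_real_derivative 0) (at x)" by (rule DERIV_const)
  have eq: "\<And>y. y \<in> {..<a} \<Longrightarrow> 0 = integral {0..y} G"
  proof -
    fix y assume "y \<in> {..<a}"
    then have "integral {0..y} G = integral {0..y} (\<lambda>_. 0)"
    proof (intro integral_cong)
      fix t assume "y \<in> {..<a}" "t \<in> {0..y}"
      then show "G t = 0" by (intro z) simp
    qed
    then show "0 = integral {0..y} G" by simp
  qed
  have "((\<lambda>t. integral {0..t} G) has_real_derivative 0) (at x)"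
    by (rule has_field_derivative_transform_within_open[OF d0 open_lessThan _ eq]) (use True in simp)
  then show ?thesis using Gx by simp
next
  case False
  have c: "continuous_on {0..x+1} G" by (rule sm_cont[OF G])
  have xin: "x \<in> {0..x+1}" using False a by simp
  have "((\<lambda>t. integral {0..t} G) has_real_derivative G x) (at x within {0..x+1})"
    by (rule integral_has_real_derivative[OF c xin])
  moreover have "x \<in> interior {0..x+1}" using False a by (simp only: interior_atLeastAtMost_real) simp
  ultimately show ?thesis by (metis at_within_interior)
qed

lemma antider_smooth:
  fixes G :: "real \<Rightarrow> real" and a :: real
  assumes G: "smooth_fun G" and a: "0 < a" and z: "\<And>t. t \<le> a \<Longrightarrow> G t = 0"
  shows "smooth_fun (\<lambda>t. integral {0..t} G)"
  using antider[OF assms] G by (rule sm_from_deriv)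

lemma antider_zero_left:
  fixes G :: "real \<Rightarrow> real" and a t :: real
  assumes "\<And>t. t \<le> a \<Longrightarrow> G t = 0" "t \<le> a"
  shows "integral {0..t} G = (0::real)"
proof -
  have "integral {0..t} G = integral {0..t} (\<lambda>_. 0::real)"
  proof (intro integral_cong)
    fix x assume "x \<in> {0..t}"
    then have "x \<le> a" using assms(2) by simp
    then show "G x = 0" by (rule assms(1))
  qed
  then show ?thesis by simp
qed

lemma antider_zero_right:
  fixes G :: "real \<Rightarrow> real"
  assumes G: "smooth_fun G" and z: "\<And>t. b \<le> t \<Longrightarrow> G t = 0" and b: "0 \<le> b" "b \<le> 1"
    and I: "integral {0..1} G = 0" and t: "b \<le> t"
  shows "integral {0..t} G = 0"
proof (cases "t \<le> 1")
  case True
  have "integral {0..t} G + integral {t..1} G = integral {0..1} G"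
    by (rule Henstock_Kurzweil_Integration.integral_combine) (use True t b integrable_continuous_real[OF sm_cont[OF G]] in auto)
  moreover have "integral {t..1} G = integral {t..1} (\<lambda>_. 0)"
    by (intro integral_cong) (use z t in auto)
  ultimately show ?thesis using I by simp
next
  case False
  have "integral {0..1} G + integral {1..t} G = integral {0..t} G"
    by (rule Henstock_Kurzweil_Integration.integral_combine) (use False integrable_continuous_real[OF sm_cont[OF G]] in auto)
  moreover have "integral {1..t} G = integral {1..t} (\<lambda>_. 0)"
    by (intro integral_cong) (use z b in auto)
  ultimately show ?thesis using I by simp
qed

lemma bound_cont:
  fixes f :: "real \<Rightarrow> real"
  assumes "continuous_on {0..1} f"
  shows "\<exists>B>0. \<forall>t\<in>{0..1}. \<bar>f t\<bar> \<le> B"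
proof -
  have "compact (f ` {0..1})" using assms by (intro compact_continuous_image) auto
  then obtain B where "B > 0" "\<forall>y\<in>f ` {0..1}. norm y \<le> B"
    using compact_imp_bounded bounded_pos by blast
  then show ?thesis by auto
qed

lemma sm_iter: "smooth_fun f \<Longrightarrow> (deriv ^^ j) f differentiable (at x)"
  unfolding smooth_fun_def by blast

lemma bound_derivs:
  assumes P: "smooth_fun P"
  shows "\<exists>B>0. \<forall>j\<le>m. \<forall>t\<in>{0..1}. \<bar>(deriv ^^ j) P t\<bar> \<le> B"
proof (induction m)
  case 0
  obtain B where "B > 0" "\<forall>t\<in>{0..1}. \<bar>P t\<bar> \<le> B" using bound_cont sm_cont[OF P] by blast
  then show ?case by auto
next
  case (Suc m)
  then obtain B where B: "B > 0" "\<forall>j\<le>m. \<forall>t\<in>{0..1}. \<bar>(deriv ^^ j) P t\<bar> \<le> B" by blast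
  have "continuous_on {0..1} ((deriv ^^ Suc m) P)"
    by (meson sm_iter[OF P] differentiable_imp_continuous_within continuous_at_imp_continuous_on)
  then obtain B' where B': "B' > 0" "\<forall>t\<in>{0..1}. \<bar>(deriv ^^ Suc m) P t\<bar> \<le> B'" using bound_cont by blast
  show ?case
  proof (intro exI[of _ "max B B'"] conjI allI impI ballI)
    fix j t assume "j \<le> Suc m" "t \<in> {0..1::real}"
    then show "\<bar>(deriv ^^ j) P t\<bar> \<le> max B B'"
      using B B' by (cases "j = Suc m") (auto simp: le_Suc_eq intro: le_max_iff_disj[THEN iffD2])
  qed (use B in auto)
qed

lemma cm_pert:
  assumes f: "smooth_fun f" and P: "smooth_fun P"
    and B: "\<forall>j\<le>m. \<forall>t\<in>{0..1}. \<bar>(deriv ^^ j) P t\<bar> \<le> B"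
    and d: "0 \<le> \<delta>" "\<delta> * B < \<epsilon>"
  shows "Cm_close m \<epsilon> (\<lambda>t. f t + \<delta> * P t) f"
  unfolding Cm_close_def
proof (intro allI impI ballI)
  fix j t assume j: "j \<le> m" and t: "t \<in> {0..1::real}"
  have "(deriv ^^ j) (\<lambda>t. f t + \<delta> * P t) = (\<lambda>t. (deriv ^^ j) f t + \<delta> * (deriv ^^ j) P t)"
    by (intro lin_deriv sm_iter f P)
  then have "\<bar>(deriv ^^ j) (\<lambda>t. f t + \<delta> * P t) t - (deriv ^^ j) f t\<bar> = \<delta> * \<bar>(deriv ^^ j) P t\<bar>"
    using d by (simp add: abs_mult)
  also have "\<dots> \<le> \<delta> * B" using B j t d by (simp add: mult_left_mono)
  finally show "\<bar>(deriv ^^ j) (\<lambda>t. f t + \<delta> * P t) t - (deriv ^^ j) f t\<bar> < \<epsilon>" using d by simp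
qed

lemma agree_pert:
  assumes "\<And>t. t \<le> 1/8 \<or> 7/8 \<le> t \<Longrightarrow> P t = 0"
  shows "agree_near_boundary (\<lambda>t. f t + \<delta> * P t) f"
  unfolding agree_near_boundary_def
  by (rule exI[of _ "1/8"]) (use assms in auto)



lemma sm_add: "smooth_fun f \<Longrightarrow> smooth_fun g \<Longrightarrow> smooth_fun (\<lambda>x. f x + g x)"
  using sm_lin[of f g 1] by simp

lemma sm_cmult: "smooth_fun f \<Longrightarrow> smooth_fun (\<lambda>x. c * f x)"
  using sm_lin[OF sm_const[of 0], of f c] by simp

lemma Cm_close_refl: "\<epsilon> > 0 \<Longrightarrow> Cm_close m \<epsilon> f f"
  by (simp add: Cm_close_def)

lemma agree_refl: "agree_near_boundary f f"
  by (auto simp: agree_near_boundary_def intro: exI[of _ 1])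

lemma alg1:
  fixes a1 a2 h1 h2 d f :: real
  assumes "a1 * h2 = a2 * h1"
  shows "(a1 + d * (-(f * a2))) * (h2 + d * (f * h1)) = (a2 + d * (f * a1)) * (h1 + d * (-(f * h2)))"
proof -
  have "(a1 + d * (-(f * a2))) * (h2 + d * (f * h1)) - (a2 + d * (f * a1)) * (h1 + d * (-(f * h2)))
      = (a1 * h2 - a2 * h1) * (1 + d * f * (d * f))" by (simp add: algebra_simps)
  then show ?thesis using assms by simp
qed

lemma alg2:
  fixes x1 x2 y1 y2 d f :: real
  assumes c: "x1 * y2 = x2 * y1" and n: "x1 * (y2 + d * (f * y1)) = x2 * (y1 + d * (-(f * y2)))"
    and d: "d \<noteq> 0" and f: "f \<noteq> 0" and x: "\<not> (x1 = 0 \<and> x2 = 0)" and y: "\<not> (y1 = 0 \<and> y2 = 0)"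
  shows False
proof -
  have "d * f * (x1 * y1 + x2 * y2) = 0" using c n by (simp add: algebra_simps)
  then have dot: "x1 * y1 + x2 * y2 = 0" using d f by simp
  have "(x1^2 + x2^2) * (y1^2 + y2^2) = (x1 * y1 + x2 * y2)^2 + (x1 * y2 - x2 * y1)^2"
    by (simp add: algebra_simps power2_eq_square)
  also have "\<dots> = 0" using dot c by simp
  finally have "(x1^2 + x2^2) * (y1^2 + y2^2) = 0" .
  moreover have "x1^2 + x2^2 > 0" using x by (simp add: sum_power2_gt_zero_iff)
  moreover have "y1^2 + y2^2 > 0" using y by (simp add: sum_power2_gt_zero_iff)
  ultimately show False by (metis mult_pos_pos less_irrefl)
qed

lemma bound_mono:
  assumes "\<forall>j\<le>m. \<forall>t\<in>S. \<bar>F j t\<bar> \<le> (b::real)" "b \<le> B"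
  shows "\<forall>j\<le>m. \<forall>t\<in>S. \<bar>F j t\<bar> \<le> B"
  using assms order_trans by blast

definition Good where
  "Good \<sigma> g1 g2 g3 h1 h2 \<epsilon> m g1' g2' g3' h1' h2' \<longleftrightarrow>
     T2_inv_SHS \<sigma> g1' g2' g3' h1' h2'
             \<and> Cm_close m \<epsilon> g1' g1 \<and> Cm_close m \<epsilon> g2' g2
             \<and> Cm_close m \<epsilon> g3' g3 \<and> Cm_close m \<epsilon> h1' h1
             \<and> Cm_close m \<epsilon> h2' h2
             \<and> agree_near_boundary g1' g1 \<and> agree_near_boundary g2' g2
             \<and> agree_near_boundary g3' g3 \<and> agree_near_boundary h1' h1
             \<and> agree_near_boundary h2' h2
             \<and> \<not> constant_slope h1' h2'"

lemma comp_pert: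
  fixes \<sigma> :: real and g1 g2 g3 h1 h2 :: "real \<Rightarrow> real"
  assumes sig: "\<sigma> = 1 \<or> \<sigma> = -1" and shs: "T2_inv_SHS \<sigma> g1 g2 g3 h1 h2"
    and cs: "constant_slope h1 h2" and \<epsilon>: "\<epsilon> > 0"
  shows "\<exists>g1' g2' g3' h1' h2'. Good \<sigma> g1 g2 g3 h1 h2 \<epsilon> m g1' g2' g3' h1' h2'"
proof -
  have sg1: "smooth_fun g1" and sg2: "smooth_fun g2" and sg3: "smooth_fun g3"
    and sh1: "smooth_fun h1" and sh2: "smooth_fun h2"
    and pos: "\<forall>t\<in>{0..1}. \<sigma> * (g2 t * h1 t - g1 t * h2 t) > 0"
    and dc: "\<forall>t\<in>{0..1}. deriv g1 t * h2 t = deriv g2 t * h1 t"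
    using shs by (auto simp: T2_inv_SHS_def)
  define \<rho>1 where "\<rho>1 = bump (1/8) (2/8)"
  define \<rho>2 where "\<rho>2 = bump (3/8) (4/8)"
  define \<rho>3 where "\<rho>3 = bump (5/8) (6/8)"
  have s\<rho>: "smooth_fun \<rho>1" "smooth_fun \<rho>2" "smooth_fun \<rho>3"
    unfolding \<rho>1_def \<rho>2_def \<rho>3_def by (rule bump_smooth)+
  have sdg: "smooth_fun (deriv g1)" "smooth_fun (deriv g2)" using sg1 sg2 by (simp_all add: sm_deriv)
  define a1 where "a1 = integral {0..1} (\<lambda>t. \<rho>1 t * deriv g1 t)"
  define a2 where "a2 = integral {0..1} (\<lambda>t. \<rho>2 t * deriv g1 t)"
  define a3 where "a3 = integral {0..1} (\<lambda>t. \<rho>3 t * deriv g1 t)"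
  define b1 where "b1 = integral {0..1} (\<lambda>t. \<rho>1 t * deriv g2 t)"
  define b2 where "b2 = integral {0..1} (\<lambda>t. \<rho>2 t * deriv g2 t)"
  define b3 where "b3 = integral {0..1} (\<lambda>t. \<rho>3 t * deriv g2 t)"
  have hi: "\<And>f g. smooth_fun f \<Longrightarrow> smooth_fun g \<Longrightarrow>
     ((\<lambda>t. f t * g t) has_integral integral {0..1} (\<lambda>t. f t * g t)) {0..1}"
    by (intro integrable_integral integrable_continuous_real sm_cont sm_mult)
  obtain c1 c2 c3 where cnz: "c1 \<noteq> 0 \<or> c2 \<noteq> 0 \<or> c3 \<noteq> 0"
    and ca: "c1*a1 + c2*a2 + c3*a3 = 0" and cb: "c1*b1 + c2*b2 + c3*b3 = 0"
    using lin3[of a1 a2 a3 b1 b2 b3] by blast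
  define \<phi> where "\<phi> t = c1 * \<rho>1 t + c2 * \<rho>2 t + c3 * \<rho>3 t" for t
  have s\<phi>: "smooth_fun \<phi>"
    unfolding \<phi>_def[abs_def] by (intro sm_add sm_cmult s\<rho>)
  have \<phi>z: "\<phi> t = 0" if "t \<le> 1/8 \<or> 6/8 \<le> t" for t
    using that unfolding \<phi>_def \<rho>1_def \<rho>2_def \<rho>3_def by (auto simp: bump_zero)
  obtain t0 where t0: "t0 \<in> {0..1}" "\<phi> t0 \<noteq> 0"
  proof -
    consider "c1 \<noteq> 0" | "c2 \<noteq> 0" | "c3 \<noteq> 0" using cnz by blast
    then show ?thesis
    proof cases
      case 1
      have "\<phi> (3/16) = c1 * \<rho>1 (3/16)" unfolding \<phi>_def \<rho>1_def \<rho>2_def \<rho>3_def by (simp add: bump_zero)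
      moreover have "\<rho>1 (3/16) > 0" unfolding \<rho>1_def by (rule bump_pos) simp_all
      ultimately show ?thesis using 1 that[of "3/16"] by simp
    next
      case 2
      have "\<phi> (7/16) = c2 * \<rho>2 (7/16)" unfolding \<phi>_def \<rho>1_def \<rho>2_def \<rho>3_def by (simp add: bump_zero)
      moreover have "\<rho>2 (7/16) > 0" unfolding \<rho>2_def by (rule bump_pos) simp_all
      ultimately show ?thesis using 2 that[of "7/16"] by simp
    next
      case 3
      have "\<phi> (11/16) = c3 * \<rho>3 (11/16)" unfolding \<phi>_def \<rho>1_def \<rho>2_def \<rho>3_def by (simp add: bump_zero)
      moreover have "\<rho>3 (11/16) > 0" unfolding \<rho>3_def by (rule bump_pos) simp_all
      ultimately show ?thesis using 3 that[of "11/16"] by simp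
    qed
  qed
  define G1 where "G1 t = - (\<phi> t * deriv g2 t)" for t
  define G2 where "G2 t = \<phi> t * deriv g1 t" for t
  have sG: "smooth_fun G1" "smooth_fun G2"
    unfolding G1_def[abs_def] G2_def[abs_def]
    using sm_cmult[OF sm_mult[OF s\<phi> sdg(2)], of "-1"] sm_mult[OF s\<phi> sdg(1)] by simp_all
  have Gz: "G1 t = 0" "G2 t = 0" if "t \<le> 1/8 \<or> 6/8 \<le> t" for t
    using \<phi>z[OF that] by (simp_all add: G1_def G2_def)
  have ia: "((\<lambda>t. \<rho>1 t * deriv g1 t) has_integral a1) {0..1}"
            "((\<lambda>t. \<rho>2 t * deriv g1 t) has_integral a2) {0..1}"
            "((\<lambda>t. \<rho>3 t * deriv g1 t) has_integral a3) {0..1}"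
            "((\<lambda>t. \<rho>1 t * deriv g2 t) has_integral b1) {0..1}"
            "((\<lambda>t. \<rho>2 t * deriv g2 t) has_integral b2) {0..1}"
            "((\<lambda>t. \<rho>3 t * deriv g2 t) has_integral b3) {0..1}"
    unfolding a1_def a2_def a3_def b1_def b2_def b3_def
    by (rule hi[OF s\<rho>(1) sdg(1)] hi[OF s\<rho>(2) sdg(1)] hi[OF s\<rho>(3) sdg(1)]
             hi[OF s\<rho>(1) sdg(2)] hi[OF s\<rho>(2) sdg(2)] hi[OF s\<rho>(3) sdg(2)])+
  have IG2: "integral {0..1} G2 = 0"
  proof -
    have "((\<lambda>t. c1 * (\<rho>1 t * deriv g1 t) + c2 * (\<rho>2 t * deriv g1 t) + c3 * (\<rho>3 t * deriv g1 t))
            has_integral (c1 * a1 + c2 * a2 + c3 * a3)) {0..1}"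
      by (rule has_integral_add has_integral_mult_right ia)+
    moreover have "(\<lambda>t. c1 * (\<rho>1 t * deriv g1 t) + c2 * (\<rho>2 t * deriv g1 t) + c3 * (\<rho>3 t * deriv g1 t)) = G2"
      by (rule ext) (simp add: G2_def \<phi>_def algebra_simps)
    ultimately have "(G2 has_integral 0) {0..1}" using ca by simp
    then show ?thesis by (rule integral_unique)
  qed
  have IG1: "integral {0..1} G1 = 0"
  proof -
    have "((\<lambda>t. (-1) * (c1 * (\<rho>1 t * deriv g2 t) + c2 * (\<rho>2 t * deriv g2 t) + c3 * (\<rho>3 t * deriv g2 t)))
            has_integral ((-1) * (c1 * b1 + c2 * b2 + c3 * b3))) {0..1}"
      by (rule has_integral_add has_integral_mult_right ia)+
    moreover have "(\<lambda>t. (-1) * (c1 * (\<rho>1 t * deriv g2 t) + c2 * (\<rho>2 t * deriv g2 t) + c3 * (\<rho>3 t * deriv g2 t))) = G1"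
      by (rule ext) (simp add: G1_def \<phi>_def algebra_simps)
    ultimately have "(G1 has_integral 0) {0..1}" using cb by simp
    then show ?thesis by (rule integral_unique)
  qed
  define \<Gamma>1 where "\<Gamma>1 t = integral {0..t} G1" for t
  define \<Gamma>2 where "\<Gamma>2 t = integral {0..t} G2" for t
  have zl: "\<And>t. t \<le> 1/8 \<Longrightarrow> G1 t = 0" "\<And>t. t \<le> 1/8 \<Longrightarrow> G2 t = 0" using Gz by auto
  have zr: "\<And>t. 6/8 \<le> t \<Longrightarrow> G1 t = 0" "\<And>t. 6/8 \<le> t \<Longrightarrow> G2 t = 0" using Gz by auto
  have s\<Gamma>1: "smooth_fun \<Gamma>1" unfolding \<Gamma>1_def[abs_def]
    by (rule antider_smooth[OF sG(1), of "1/8"]) (simp_all add: zl(1))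
  have s\<Gamma>2: "smooth_fun \<Gamma>2" unfolding \<Gamma>2_def[abs_def]
    by (rule antider_smooth[OF sG(2), of "1/8"]) (simp_all add: zl(2))
  note s\<Gamma> = s\<Gamma>1 s\<Gamma>2
  have d\<Gamma>1: "(\<Gamma>1 has_real_derivative G1 x) (at x)" for x unfolding \<Gamma>1_def[abs_def]
    by (rule antider[OF sG(1), of "1/8"]) (simp_all add: zl(1))
  have d\<Gamma>2: "(\<Gamma>2 has_real_derivative G2 x) (at x)" for x unfolding \<Gamma>2_def[abs_def]
    by (rule antider[OF sG(2), of "1/8"]) (simp_all add: zl(2))
  note d\<Gamma> = d\<Gamma>1 d\<Gamma>2
  have \<Gamma>z: "\<Gamma>1 t = 0" "\<Gamma>2 t = 0" if "t \<le> 1/8 \<or> 7/8 \<le> t" for t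
  proof -
    show "\<Gamma>1 t = 0"
    proof (cases "t \<le> 1/8")
      case True then show ?thesis unfolding \<Gamma>1_def using antider_zero_left[where G=G1 and a="1/8" and t=t] zl(1) by simp
    next
      case False then show ?thesis unfolding \<Gamma>1_def using that
        using antider_zero_right[where G=G1 and b="6/8" and t=t] sG(1) zr(1) IG1 by simp
    qed
    show "\<Gamma>2 t = 0"
    proof (cases "t \<le> 1/8")
      case True then show ?thesis unfolding \<Gamma>2_def using antider_zero_left[where G=G2 and a="1/8" and t=t] zl(2) by simp
    next
      case False then show ?thesis unfolding \<Gamma>2_def using that
        using antider_zero_right[where G=G2 and b="6/8" and t=t] sG(2) zr(2) IG2 by simp
    qed
  qed
  define P1 where "P1 t = -(\<phi> t * h2 t)" for t
  define P2 where "P2 t = \<phi> t * h1 t" for t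
  have sP: "smooth_fun P1" "smooth_fun P2"
    unfolding P1_def[abs_def] P2_def[abs_def]
    using sm_cmult[OF sm_mult[OF s\<phi> sh2], of "-1"] sm_mult[OF s\<phi> sh1] by simp_all
  have Pz: "P1 t = 0" "P2 t = 0" if "t \<le> 1/8 \<or> 7/8 \<le> t" for t
    using \<phi>z[of t] that by (auto simp: P1_def P2_def)
  obtain B1 where B1: "B1 > 0" "\<forall>j\<le>m. \<forall>t\<in>{0..1}. \<bar>(deriv ^^ j) \<Gamma>1 t\<bar> \<le> B1" using bound_derivs[OF s\<Gamma>(1)] by blast
  obtain B2 where B2: "B2 > 0" "\<forall>j\<le>m. \<forall>t\<in>{0..1}. \<bar>(deriv ^^ j) \<Gamma>2 t\<bar> \<le> B2" using bound_derivs[OF s\<Gamma>(2)] by blast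
  obtain B3 where B3: "B3 > 0" "\<forall>j\<le>m. \<forall>t\<in>{0..1}. \<bar>(deriv ^^ j) P1 t\<bar> \<le> B3" using bound_derivs[OF sP(1)] by blast
  obtain B4 where B4: "B4 > 0" "\<forall>j\<le>m. \<forall>t\<in>{0..1}. \<bar>(deriv ^^ j) P2 t\<bar> \<le> B4" using bound_derivs[OF sP(2)] by blast
  define B where "B = B1 + B2 + B3 + B4"
  have Bpos: "B > 0" using B1 B2 B3 B4 by (simp add: B_def)
  have Bb: "\<forall>j\<le>m. \<forall>t\<in>{0..1}. \<bar>(deriv ^^ j) \<Gamma>1 t\<bar> \<le> B"
           "\<forall>j\<le>m. \<forall>t\<in>{0..1}. \<bar>(deriv ^^ j) \<Gamma>2 t\<bar> \<le> B"
           "\<forall>j\<le>m. \<forall>t\<in>{0..1}. \<bar>(deriv ^^ j) P1 t\<bar> \<le> B"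
           "\<forall>j\<le>m. \<forall>t\<in>{0..1}. \<bar>(deriv ^^ j) P2 t\<bar> \<le> B"
    using bound_mono[where F="\<lambda>j. (deriv ^^ j) \<Gamma>1", OF B1(2)]
          bound_mono[where F="\<lambda>j. (deriv ^^ j) \<Gamma>2", OF B2(2)]
          bound_mono[where F="\<lambda>j. (deriv ^^ j) P1", OF B3(2)]
          bound_mono[where F="\<lambda>j. (deriv ^^ j) P2", OF B4(2)]
          B1(1) B2(1) B3(1) B4(1) unfolding B_def by simp_all
  obtain K1 where K1: "K1 > 0" "\<forall>t\<in>{0..1}. \<bar>g1 t\<bar> \<le> K1" using bound_cont[OF sm_cont[OF sg1]] by blast
  obtain K2 where K2: "K2 > 0" "\<forall>t\<in>{0..1}. \<bar>g2 t\<bar> \<le> K2" using bound_cont[OF sm_cont[OF sg2]] by blast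
  obtain K3 where K3: "K3 > 0" "\<forall>t\<in>{0..1}. \<bar>h1 t\<bar> \<le> K3" using bound_cont[OF sm_cont[OF sh1]] by blast
  obtain K4 where K4: "K4 > 0" "\<forall>t\<in>{0..1}. \<bar>h2 t\<bar> \<le> K4" using bound_cont[OF sm_cont[OF sh2]] by blast
  obtain K5 where K5: "K5 > 0" "\<forall>t\<in>{0..1}. \<bar>\<Gamma>1 t\<bar> \<le> K5" using bound_cont[OF sm_cont[OF s\<Gamma>(1)]] by blast
  obtain K6 where K6: "K6 > 0" "\<forall>t\<in>{0..1}. \<bar>\<Gamma>2 t\<bar> \<le> K6" using bound_cont[OF sm_cont[OF s\<Gamma>(2)]] by blast
  obtain K7 where K7: "K7 > 0" "\<forall>t\<in>{0..1}. \<bar>\<phi> t\<bar> \<le> K7" using bound_cont[OF sm_cont[OF s\<phi>]] by blast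
  define K where "K = 1 + K1 + K2 + K3 + K4 + K5 + K6 + K7"
  have K: "1 \<le> K" using K1 K2 K3 K4 K5 K6 K7 by (simp add: K_def)
  have Kb: "\<forall>t\<in>{0..1}. \<bar>g1 t\<bar> \<le> K \<and> \<bar>g2 t\<bar> \<le> K \<and> \<bar>h1 t\<bar> \<le> K \<and> \<bar>h2 t\<bar> \<le> K
      \<and> \<bar>\<Gamma>1 t\<bar> \<le> K \<and> \<bar>\<Gamma>2 t\<bar> \<le> K \<and> \<bar>\<phi> t\<bar> \<le> K"
  proof
    fix t :: real assume t: "t \<in> {0..1}"
    have "\<bar>g1 t\<bar> \<le> K1" "\<bar>g2 t\<bar> \<le> K2" "\<bar>h1 t\<bar> \<le> K3" "\<bar>h2 t\<bar> \<le> K4"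
      "\<bar>\<Gamma>1 t\<bar> \<le> K5" "\<bar>\<Gamma>2 t\<bar> \<le> K6" "\<bar>\<phi> t\<bar> \<le> K7"
      using K1(2) K2(2) K3(2) K4(2) K5(2) K6(2) K7(2) t by blast+
    then show "\<bar>g1 t\<bar> \<le> K \<and> \<bar>g2 t\<bar> \<le> K \<and> \<bar>h1 t\<bar> \<le> K \<and> \<bar>h2 t\<bar> \<le> K
      \<and> \<bar>\<Gamma>1 t\<bar> \<le> K \<and> \<bar>\<Gamma>2 t\<bar> \<le> K \<and> \<bar>\<phi> t\<bar> \<le> K"
      using K1(1) K2(1) K3(1) K4(1) K5(1) K6(1) K7(1) unfolding K_def by (intro conjI) linarith+
  qed
  have cQ: "continuous_on {0..1} (\<lambda>t. \<sigma> * (g2 t * h1 t - g1 t * h2 t))"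
    by (intro continuous_intros sm_cont sg1 sg2 sh1 sh2)
  obtain t1 where t1: "t1 \<in> {0..1}" "\<forall>t\<in>{0..1}. \<sigma> * (g2 t1 * h1 t1 - g1 t1 * h2 t1) \<le> \<sigma> * (g2 t * h1 t - g1 t * h2 t)"
    using continuous_attains_inf[OF compact_Icc _ cQ] by auto
  define \<mu> where "\<mu> = \<sigma> * (g2 t1 * h1 t1 - g1 t1 * h2 t1)"
  have \<mu>: "\<mu> > 0" using pos t1 by (simp add: \<mu>_def)
  have K3pos: "K^3 > 0" using K by simp
  define \<delta> where "\<delta> = min (1/2) (min (\<epsilon> / (2 * B)) (\<mu> / (12 * K^3)))"
  have \<delta>0: "\<delta> > 0" using \<epsilon> Bpos \<mu> K3pos by (simp add: \<delta>_def)
  have \<delta>1: "\<delta> \<le> 1" by (simp add: \<delta>_def)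
  have \<delta>B: "\<delta> * B < \<epsilon>"
  proof -
    have "\<delta> \<le> \<epsilon> / (2 * B)" by (simp add: \<delta>_def)
    then have "\<delta> * B \<le> \<epsilon> / (2 * B) * B" by (rule mult_right_mono) (use Bpos in simp)
    also have "\<dots> = \<epsilon> / 2" using Bpos by simp
    finally show ?thesis using \<epsilon> by simp
  qed
  have \<delta>K: "\<delta> * (6 * K^3) < \<mu>"
  proof -
    have "\<delta> \<le> \<mu> / (12 * K^3)" by (simp add: \<delta>_def)
    then have "\<delta> * (6 * K^3) \<le> \<mu> / (12 * K^3) * (6 * K^3)" by (rule mult_right_mono) (use K3pos in simp)
    also have "\<dots> = \<mu> / 2" using K3pos by simp
    finally show ?thesis using \<mu> by simp
  qed
  define g1' where "g1' t = g1 t + \<delta> * \<Gamma>1 t" for t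
  define g2' where "g2' t = g2 t + \<delta> * \<Gamma>2 t" for t
  define h1' where "h1' t = h1 t + \<delta> * P1 t" for t
  define h2' where "h2' t = h2 t + \<delta> * P2 t" for t
  have dg1': "deriv g1' t = deriv g1 t + \<delta> * G1 t" for t
  proof -
    have "(g1' has_real_derivative deriv g1 t + \<delta> * G1 t) (at t)"
      unfolding g1'_def[abs_def] by (intro DERIV_add DERIV_cmult sm_DERIV sg1 d\<Gamma>)
    then show ?thesis by (rule DERIV_imp_deriv)
  qed
  have dg2': "deriv g2' t = deriv g2 t + \<delta> * G2 t" for t
  proof -
    have "(g2' has_real_derivative deriv g2 t + \<delta> * G2 t) (at t)"
      unfolding g2'_def[abs_def] by (intro DERIV_add DERIV_cmult sm_DERIV sg2 d\<Gamma>)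
    then show ?thesis by (rule DERIV_imp_deriv)
  qed
  have SHS': "T2_inv_SHS \<sigma> g1' g2' g3 h1' h2'"
    unfolding T2_inv_SHS_def
  proof (intro conjI ballI)
    show "smooth_fun g1'" unfolding g1'_def[abs_def] by (intro sm_lin sg1 s\<Gamma>)
    show "smooth_fun g2'" unfolding g2'_def[abs_def] by (intro sm_lin sg2 s\<Gamma>)
    show "smooth_fun g3" by (rule sg3)
    show "smooth_fun h1'" unfolding h1'_def[abs_def] by (intro sm_lin sh1 sP)
    show "smooth_fun h2'" unfolding h2'_def[abs_def] by (intro sm_lin sh2 sP)
  next
    fix t :: real assume t: "t \<in> {0..1}"
    have "\<mu> \<le> \<sigma> * (g2 t * h1 t - g1 t * h2 t)" using t1 t by (simp add: \<mu>_def)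
    moreover have "\<bar>\<sigma>\<bar> = 1" using sig by auto
    moreover obtain kt: "\<bar>g1 t\<bar> \<le> K" "\<bar>g2 t\<bar> \<le> K" "\<bar>h1 t\<bar> \<le> K" "\<bar>h2 t\<bar> \<le> K"
      "\<bar>\<Gamma>1 t\<bar> \<le> K" "\<bar>\<Gamma>2 t\<bar> \<le> K" "\<bar>\<phi> t\<bar> \<le> K" using Kb t by blast
    moreover have "0 \<le> \<delta>" using \<delta>0 by simp
    ultimately have "\<sigma> * ((g2 t + \<delta>*\<Gamma>2 t) * (h1 t + \<delta>*(-(\<phi> t*h2 t))) - (g1 t + \<delta>*\<Gamma>1 t) * (h2 t + \<delta>*(\<phi> t*h1 t))) > 0"
      using pos_pert[OF _ K kt(1-7) _ \<delta>1 _ \<delta>K] by blast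
    then show "\<sigma> * (g2' t * h1' t - g1' t * h2' t) > 0"
      by (simp add: g1'_def g2'_def h1'_def h2'_def P1_def P2_def)
  next
    fix t :: real assume t: "t \<in> {0..1}"
    show "deriv g1' t * h2' t = deriv g2' t * h1' t"
      unfolding dg1' dg2' h1'_def h2'_def P1_def P2_def G1_def G2_def
      using alg1[OF dc[rule_format, OF t], of \<delta> "\<phi> t"] by simp
  qed
  have ncs: "\<not> constant_slope h1' h2'"
  proof
    assume "constant_slope h1' h2'"
    then have e: "h1' 0 * h2' t0 = h2' 0 * h1' t0" using t0 by (auto simp: constant_slope_def)
    have c: "h1 0 * h2 t0 = h2 0 * h1 t0" using cs t0 by (auto simp: constant_slope_def)
    have \<phi>0: "\<phi> 0 = 0" by (rule \<phi>z) simp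
    have nz0: "\<not> (h1 0 = 0 \<and> h2 0 = 0)" using pos[rule_format, of 0] by auto
    have nzt: "\<not> (h1 t0 = 0 \<and> h2 t0 = 0)" using pos[rule_format, OF t0(1)] by auto
    have e': "h1 0 * (h2 t0 + \<delta> * (\<phi> t0 * h1 t0)) = h2 0 * (h1 t0 + \<delta> * (-(\<phi> t0 * h2 t0)))"
      using e \<phi>0 by (simp add: h1'_def h2'_def P1_def P2_def)
    show False using alg2[OF c e'] \<delta>0 t0 nz0 nzt by simp
  qed
  have "Good \<sigma> g1 g2 g3 h1 h2 \<epsilon> m g1' g2' g3 h1' h2'"
    unfolding Good_def
  proof (intro conjI SHS' ncs Cm_close_refl \<epsilon> agree_refl)
    show "Cm_close m \<epsilon> g1' g1" unfolding g1'_def[abs_def]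
      by (rule cm_pert[OF sg1 s\<Gamma>(1) Bb(1)]) (use \<delta>0 \<delta>B in auto)
    show "Cm_close m \<epsilon> g2' g2" unfolding g2'_def[abs_def]
      by (rule cm_pert[OF sg2 s\<Gamma>(2) Bb(2)]) (use \<delta>0 \<delta>B in auto)
    show "Cm_close m \<epsilon> h1' h1" unfolding h1'_def[abs_def]
      by (rule cm_pert[OF sh1 sP(1) Bb(3)]) (use \<delta>0 \<delta>B in auto)
    show "Cm_close m \<epsilon> h2' h2" unfolding h2'_def[abs_def]
      by (rule cm_pert[OF sh2 sP(2) Bb(4)]) (use \<delta>0 \<delta>B in auto)
    show "agree_near_boundary g1' g1" unfolding g1'_def[abs_def] by (rule agree_pert) (rule \<Gamma>z)
    show "agree_near_boundary g2' g2" unfolding g2'_def[abs_def] by (rule agree_pert) (rule \<Gamma>z)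
    show "agree_near_boundary h1' h1" unfolding h1'_def[abs_def] by (rule agree_pert) (rule Pz)
    show "agree_near_boundary h2' h2" unfolding h2'_def[abs_def] by (rule agree_pert) (rule Pz)
  qed
  then show ?thesis by blast
qed



lemma comp_all:
  fixes \<sigma> :: real and g1 g2 g3 h1 h2 :: "real \<Rightarrow> real"
  assumes sig: "\<sigma> = 1 \<or> \<sigma> = -1" and shs: "T2_inv_SHS \<sigma> g1 g2 g3 h1 h2" and \<epsilon>: "\<epsilon> > 0"
  shows "\<exists>p. Good \<sigma> g1 g2 g3 h1 h2 \<epsilon> m (fst p) (fst (snd p)) (fst (snd (snd p))) (fst (snd (snd (snd p)))) (snd (snd (snd (snd p))))"
proof (cases "constant_slope h1 h2")
  case True
  then obtain a b c d e where "Good \<sigma> g1 g2 g3 h1 h2 \<epsilon> m a b c d e"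
    using comp_pert[OF sig shs True \<epsilon>] by blast
  then show ?thesis by (intro exI[of _ "(a, b, c, d, e)"]) simp
next
  case False
  have "Good \<sigma> g1 g2 g3 h1 h2 \<epsilon> m g1 g2 g3 h1 h2"
    unfolding Good_def using shs False \<epsilon> by (simp add: Cm_close_refl agree_refl)
  then show ?thesis by (intro exI[of _ "(g1, g2, g3, h1, h2)"]) simp
qed

theorem lemma6p2:
  fixes k :: nat
    and \<sigma> :: "nat \<Rightarrow> real"
    and g1 g2 g3 h1 h2 :: "nat \<Rightarrow> real \<Rightarrow> real"
  assumes "\<forall>i<k. \<sigma> i = 1 \<or> \<sigma> i = -1"
    and "\<forall>i<k. T2_inv_SHS (\<sigma> i) (g1 i) (g2 i) (g3 i) (h1 i) (h2 i)"
  shows "\<forall>\<epsilon>>0. \<forall>m::nat. \<exists>g1' g2' g3' h1' h2' :: nat \<Rightarrow> real \<Rightarrow> real.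
           \<forall>i<k. T2_inv_SHS (\<sigma> i) (g1' i) (g2' i) (g3' i) (h1' i) (h2' i)
             \<and> Cm_close m \<epsilon> (g1' i) (g1 i) \<and> Cm_close m \<epsilon> (g2' i) (g2 i)
             \<and> Cm_close m \<epsilon> (g3' i) (g3 i) \<and> Cm_close m \<epsilon> (h1' i) (h1 i)
             \<and> Cm_close m \<epsilon> (h2' i) (h2 i)
             \<and> agree_near_boundary (g1' i) (g1 i) \<and> agree_near_boundary (g2' i) (g2 i)
             \<and> agree_near_boundary (g3' i) (g3 i) \<and> agree_near_boundary (h1' i) (h1 i)
             \<and> agree_near_boundary (h2' i) (h2 i)
             \<and> \<not> constant_slope (h1' i) (h2' i)"
proof (intro allI impI)
  fix \<epsilon> :: real and m :: nat assume \<epsilon>: "\<epsilon> > 0"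
  have "\<forall>i\<in>{..<k}. \<exists>p. Good (\<sigma> i) (g1 i) (g2 i) (g3 i) (h1 i) (h2 i) \<epsilon> m
          (fst p) (fst (snd p)) (fst (snd (snd p))) (fst (snd (snd (snd p)))) (snd (snd (snd (snd p))))"
    using assms \<epsilon> comp_all by blast
  then obtain F where F: "\<forall>i\<in>{..<k}. Good (\<sigma> i) (g1 i) (g2 i) (g3 i) (h1 i) (h2 i) \<epsilon> m
          (fst (F i)) (fst (snd (F i))) (fst (snd (snd (F i)))) (fst (snd (snd (snd (F i))))) (snd (snd (snd (snd (F i)))))"
    by (rule bchoice[elim_format]) blast
  show "\<exists>g1' g2' g3' h1' h2' :: nat \<Rightarrow> real \<Rightarrow> real.
           \<forall>i<k. T2_inv_SHS (\<sigma> i) (g1' i) (g2' i) (g3' i) (h1' i) (h2' i)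
             \<and> Cm_close m \<epsilon> (g1' i) (g1 i) \<and> Cm_close m \<epsilon> (g2' i) (g2 i)
             \<and> Cm_close m \<epsilon> (g3' i) (g3 i) \<and> Cm_close m \<epsilon> (h1' i) (h1 i)
             \<and> Cm_close m \<epsilon> (h2' i) (h2 i)
             \<and> agree_near_boundary (g1' i) (g1 i) \<and> agree_near_boundary (g2' i) (g2 i)
             \<and> agree_near_boundary (g3' i) (g3 i) \<and> agree_near_boundary (h1' i) (h1 i)
             \<and> agree_near_boundary (h2' i) (h2 i)
             \<and> \<not> constant_slope (h1' i) (h2' i)"
    apply (rule exI[of _ "\<lambda>i. fst (F i)"], rule exI[of _ "\<lambda>i. fst (snd (F i))"],
           rule exI[of _ "\<lambda>i. fst (snd (snd (F i)))"], rule exI[of _ "\<lambda>i. fst (snd (snd (snd (F i))))"],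
           rule exI[of _ "\<lambda>i. snd (snd (snd (snd (F i))))"])
    using F unfolding Good_def by simp
qed

end
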